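(* Fix $n\ge1$. The following two statements are equivalent. (A) For all convex sets $K,M\subset\mathbb{R}^n$ that are symmetric about the origin, $\nu_n(K\cap M)\ge\nu_n(K)\,\nu_n(M)$, where $\nu_n$ is the probability measure on $\mathbb{R}^n$ with density $C(1+|x|^2)^{-\frac{n+1}{2}}$ with respect to Lebesgue measure, $C>0$ the normalising constant. (B) For all geodesically convex sets $K_1,K_2$ contained in the open hemisphere $B(o,\pi/2)$ of the unit round sphere $\mathbb{S}^n$ and both centrally symmetric around $o$, $\mathrm{vol}_n(K_1\cap K_2)\,\mathrm{vol}_n(B(o,\pi/2))\ge\mathrm{vol}_n(K_1)\,\mathrm{vol}_n(K_2)$.
   Context: $\mathrm{vol}_n$ is the Riemannian volume of $\mathbb{S}^n$, $d$ its geodesic distance, $B(o,\pi/2)=\{y: d(o,y)<\pi/2\}$. A subset of $B(o,\pi/2)$ is geodesically convex if any two of its points are joined by a minimizing geodesic segment inside it. Centrally symmetric around $o$ means: for every geodesic through $o$ meeting the boundary of the set at $x^+,x^-$, $d(o,x^+)=d(o,x^-)$ (equivalently, invariance under the geodesic reflection of $\mathbb{S}^n$ at $o$). *)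

theory Defs
  imports "HOL-Analysis.Analysis"
begin

(* The unit round sphere S^n is realised as the unit sphere of the
   (n+1)-dimensional Euclidean space 'a \<times> real, where 'a is R^n. *)

definition sdist :: "'b::euclidean_space \<Rightarrow> 'b \<Rightarrow> real" where
  "sdist x y = arccos (inner x y)"

definition min_geodesic :: "(real \<Rightarrow> 'b::euclidean_space) \<Rightarrow> 'b \<Rightarrow> 'b \<Rightarrow> bool" where
  "min_geodesic g x y \<longleftrightarrow> g 0 = x \<and> g 1 = y \<and> (\<forall>s\<in>{0..1}. g s \<in> sphere 0 1) \<and>
     (\<forall>s\<in>{0..1}. \<forall>t\<in>{0..1}. sdist (g s) (g t) = \<bar>s - t\<bar> * sdist x y)"

definition geod_convex :: "'b::euclidean_space set \<Rightarrow> bool" where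
  "geod_convex K \<longleftrightarrow> (\<forall>x\<in>K. \<forall>y\<in>K. \<exists>g. min_geodesic g x y \<and> g ` {0..1} \<subseteq> K)"

definition sball :: "'b::euclidean_space \<Rightarrow> real \<Rightarrow> 'b set" where
  "sball p r = {y \<in> sphere 0 1. sdist p y < r}"

definition srefl :: "'b::euclidean_space \<Rightarrow> 'b \<Rightarrow> 'b" where
  "srefl p x = (2 * inner x p) *\<^sub>R p - x"

definition centrally_symmetric :: "'b::euclidean_space \<Rightarrow> 'b set \<Rightarrow> bool" where
  "centrally_symmetric p K \<longleftrightarrow> (\<forall>x\<in>K. srefl p x \<in> K)"

definition north :: "'a::euclidean_space \<times> real" where
  "north = (0, 1)"

(* Riemannian volume of a subset A of the unit sphere S^{d-1} \<subseteq> R^d, via the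
   cone formula vol_{d-1}(A) = d * Lebesgue(\<Union>{t x | 0\<le>t\<le>1, x\<in>A}) *)
definition svol :: "'b::euclidean_space set \<Rightarrow> real" where
  "svol A = real DIM('b) * measure lebesgue {t *\<^sub>R x | t x. t \<in> {0..1} \<and> x \<in> A}"

definition cauchy_dens :: "nat \<Rightarrow> 'a::euclidean_space \<Rightarrow> real" where
  "cauchy_dens n x = (1 + (norm x)\<^sup>2) powr (- (real n + 1) / 2)"

(* nu n, used with n = DIM('a) *)
definition nu :: "nat \<Rightarrow> 'a::euclidean_space measure" where
  "nu n = density lebesgue (\<lambda>x. ennreal (cauchy_dens n x / integral\<^sup>L (lebesgue :: 'a measure) (cauchy_dens n)))"

definition origin_symmetric :: "'a::real_vector set \<Rightarrow> bool" where
  "origin_symmetric K \<longleftrightarrow> (\<forall>x\<in>K. - x \<in> K)"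

end

theory Submission
  imports Defs
begin


definition Dset :: "'a::euclidean_space set \<Rightarrow> ('a \<times> real) set" where
  "Dset U = {z. 0 < snd z \<and> (1 / snd z) *\<^sub>R fst z \<in> U \<and> norm z \<le> 1}"

definition rr :: "'a::euclidean_space \<Rightarrow> real" where "rr x = 1 / sqrt (1 + (norm x)\<^sup>2)"

lemma Dset_borel: assumes "open U" shows "Dset U \<in> sets borel"
proof -
  have o: "open ({z::'a\<times>real. 0 < snd z} \<inter> (\<lambda>z. (1 / snd z) *\<^sub>R fst z) -` U)"
  proof (rule continuous_open_preimage[OF _ _ assms])
    show "open {z::'a\<times>real. 0 < snd z}"
      by (simp add: open_Collect_less continuous_on_snd continuous_on_const)
    show "continuous_on {z::'a\<times>real. 0 < snd z} (\<lambda>z. (1 / snd z) *\<^sub>R fst z)"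
      by (intro continuous_intros) auto
  qed
  have "Dset U = ({z::'a\<times>real. 0 < snd z} \<inter> (\<lambda>z. (1 / snd z) *\<^sub>R fst z) -` U) \<inter> cball 0 1"
    by (auto simp: Dset_def)
  then show ?thesis using o by auto
qed

lemma Dset_scaled:
  assumes "0 < h"
  shows "indicator (Dset U) (h *\<^sub>R x, h) = (indicator U x * indicator {0<..rr x} h :: real)"
proof -
  have "norm (h *\<^sub>R x, h) \<le> 1 \<longleftrightarrow> h \<le> rr x"
  proof -
    have "norm (h *\<^sub>R x, h) = sqrt (h\<^sup>2 * (1 + (norm x)\<^sup>2))"
      using assms by (simp add: norm_Pair algebra_simps)
    also have "\<dots> = h * sqrt (1 + (norm x)\<^sup>2)"
      using assms by (simp add: real_sqrt_mult)
    finally show ?thesis using assms unfolding rr_def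
      by (simp add: le_divide_eq add_pos_nonneg)
  qed
  then show ?thesis using assms by (auto simp: Dset_def indicator_def)
qed

lemma nn_integral_scale:
  fixes g :: "'a::euclidean_space \<Rightarrow> ennreal"
  assumes [measurable]: "g \<in> borel_measurable borel" and c: "c \<noteq> 0"
  shows "(\<integral>\<^sup>+x. g x \<partial>lborel) = ennreal (\<bar>c\<bar>^DIM('a)) * (\<integral>\<^sup>+x. g (c *\<^sub>R x) \<partial>lborel)"
proof -
  have "(\<integral>\<^sup>+x. g x \<partial>lborel) = (\<integral>\<^sup>+x. g x \<partial>(density (distr lborel borel (\<lambda>x. 0 + c *\<^sub>R x)) (\<lambda>_. \<bar>c\<bar>^DIM('a))))"
    using lborel_affine[OF c, of "0::'a"] by simp
  also have "\<dots> = ennreal (\<bar>c\<bar>^DIM('a)) * (\<integral>\<^sup>+x. g (c *\<^sub>R x) \<partial>lborel)"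
    by (simp add: nn_integral_density nn_integral_distr nn_integral_cmult)
  finally show ?thesis .
qed

lemma int_power_interval:
  assumes "0 \<le> r"
  shows "(\<integral>\<^sup>+h. ennreal (indicator {0<..r} h * h ^ n) \<partial>lborel) = ennreal (r ^ (n+1) / (n+1))"
proof -
  have "((\<lambda>h. h ^ n) has_integral (r ^ (n+1) / (n+1) - 0 ^ (n+1) / (n+1))) {0..r}"
    using assms
  proof (intro fundamental_theorem_of_calculus)
    fix x :: real
    have "((\<lambda>a. a ^ (n + 1) / real (n + 1)) has_real_derivative (real (n+1) * x ^ n / real (n+1))) (at x within {0..r})"
      by (intro derivative_eq_intros) auto
    then show "((\<lambda>a. a ^ (n + 1) / real (n + 1)) has_vector_derivative x ^ n) (at x within {0..r})"
      by (simp add: has_real_derivative_iff_has_vector_derivative[symmetric])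
  qed (use assms in auto)
  then have "((\<lambda>h. h ^ n) has_integral (r ^ (n+1) / (n+1))) {0..r}" by simp
  then have "((\<lambda>h. h ^ n) has_integral (r ^ (n+1) / (n+1))) {0<..r}"
  proof -
    assume that: "((\<lambda>h. h ^ n) has_integral (r ^ (n+1) / (n+1))) {0..r}" 
    have "negligible {x \<in> {0..r} - {0<..r}. x ^ n \<noteq> (0::real)}"
      by (rule negligible_subset[of "{0}"]) auto
    moreover have "negligible {x \<in> {0<..r} - {0..r}. x ^ n \<noteq> (0::real)}"
      by (rule negligible_subset[of "{}"]) auto
    ultimately show ?thesis using has_integral_spike_set_eq[of "{0..r}" "{0<..r}" "\<lambda>h. h^n"] that by blast
  qed
  then show ?thesis
    by (rule nn_integral_has_integral_lebesgue[rotated]) auto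
qed

lemma Dset_measure:
  fixes U :: "'a::euclidean_space set" assumes "open U"
  shows "emeasure lborel (Dset U) * ennreal (real DIM('a) + 1)
         = (\<integral>\<^sup>+x. indicator U x * ennreal (rr x ^ (DIM('a)+1)) \<partial>lborel)"
proof -
  let ?n = "DIM('a)"
  have [measurable]: "Dset U \<in> sets borel" by (rule Dset_borel[OF assms])
  have [measurable]: "U \<in> sets borel" using assms by auto
  have rrm[measurable]: "rr \<in> borel_measurable (borel :: 'a measure)"
    unfolding rr_def by measurable
  have "emeasure lborel (Dset U) = (\<integral>\<^sup>+ z. indicator (Dset U) z \<partial>(lborel :: ('a \<times> real) measure))"
    by simp
  also have "\<dots> = (\<integral>\<^sup>+ z. indicator (Dset U) z \<partial>(lborel \<Otimes>\<^sub>M lborel))"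
    by (simp add: lborel_prod)
  also have "\<dots> = (\<integral>\<^sup>+ h. \<integral>\<^sup>+ v. indicator (Dset U) (v,h) \<partial>lborel \<partial>lborel)"
    by (rule lborel_pair.nn_integral_snd[symmetric]) (subst lborel_prod, measurable)
  also have "\<dots> = (\<integral>\<^sup>+ h. \<integral>\<^sup>+ x. ennreal (indicator U x * indicator {0<..rr x} h * h ^ ?n) \<partial>lborel \<partial>lborel)"
  proof (rule nn_integral_cong)
    fix h :: real
    show "(\<integral>\<^sup>+ v. indicator (Dset U) (v,h) \<partial>lborel) = (\<integral>\<^sup>+ x. ennreal (indicator U x * indicator {0<..rr x} h * h ^ ?n) \<partial>lborel)"
    proof (cases "0 < h")
      case True
      have [measurable]: "(\<lambda>x. indicator U x * indicator {0<..rr x} h :: real) \<in> borel_measurable borel"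
        unfolding indicator_def greaterThanAtMost_iff by measurable
      have "(\<integral>\<^sup>+ v. indicator (Dset U) (v,h) \<partial>lborel) = ennreal (\<bar>h\<bar>^?n) * (\<integral>\<^sup>+x. indicator (Dset U) (h *\<^sub>R x, h) \<partial>lborel)"
        by (rule nn_integral_scale) (use True in auto)
      also have "\<dots> = (\<integral>\<^sup>+x. ennreal (h^?n) * ennreal (indicator U x * indicator {0<..rr x} h) \<partial>lborel)"
        using True by (subst nn_integral_cmult[symmetric]) (auto simp: Dset_scaled ennreal_indicator[symmetric])
      also have "\<dots> = (\<integral>\<^sup>+ x. ennreal (indicator U x * indicator {0<..rr x} h * h ^ ?n) \<partial>lborel)"
        using True by (intro nn_integral_cong) (simp add: ennreal_mult'[symmetric] mult_ac)
      finally show ?thesis .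
    next
      case False
      then show ?thesis by (simp add: Dset_def indicator_def)
    qed
  qed
  also have "\<dots> = (\<integral>\<^sup>+ x. \<integral>\<^sup>+ h. ennreal (indicator U x * indicator {0<..rr x} h * h ^ ?n) \<partial>lborel \<partial>lborel)"
  proof (rule lborel_pair.Fubini')
    have crr: "continuous_on UNIV rr" unfolding rr_def
      by (intro continuous_intros) (auto, metis add_pos_nonneg zero_le_power2 zero_less_one less_irrefl)
    have m1: "(\<lambda>p::'a\<times>real. snd p ^ ?n) \<in> borel_measurable borel"
      by (intro borel_measurable_continuous_onI continuous_intros)
    have "open {p::'a\<times>real. 0 < snd p}" by (simp add: open_Collect_less continuous_on_snd continuous_on_const)
    moreover have "closed {p::'a\<times>real. snd p \<le> rr (fst p)}"
      by (intro closed_Collect_le continuous_intros continuous_on_compose2[OF crr]) auto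
    moreover have "open (U \<times> (UNIV::real set))" using assms by (simp add: open_Times)
    ultimately have S: "(U \<times> UNIV) \<inter> ({p::'a\<times>real. 0 < snd p} \<inter> {p::'a\<times>real. snd p \<le> rr (fst p)}) \<in> sets borel"
      by auto
    have "(\<lambda>p. indicator ((U \<times> UNIV) \<inter> ({p::'a\<times>real. 0 < snd p} \<inter> {p::'a\<times>real. snd p \<le> rr (fst p)})) p * snd p ^ ?n :: real) \<in> borel_measurable borel"
      using S m1 by measurable
    then have "(\<lambda>p. indicator ((U \<times> UNIV) \<inter> ({p::'a\<times>real. 0 < snd p} \<inter> {p::'a\<times>real. snd p \<le> rr (fst p)})) p * snd p ^ ?n :: real) \<in> borel_measurable (lborel \<Otimes>\<^sub>M lborel)"
      by (simp add: lborel_prod measurable_lborel1)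
    moreover have "(\<lambda>p. indicator ((U \<times> UNIV) \<inter> ({p::'a\<times>real. 0 < snd p} \<inter> {p::'a\<times>real. snd p \<le> rr (fst p)})) p * snd p ^ ?n :: real)
       = (\<lambda>(x, h). indicator U x * indicator {0<..rr x} h * h ^ ?n)"
      by (auto simp: indicator_def fun_eq_iff)
    ultimately have "(\<lambda>(x, h). indicator U x * indicator {0<..rr x} h * h ^ ?n) \<in> borel_measurable (lborel \<Otimes>\<^sub>M (lborel :: real measure))"
      by simp
    then show "case_prod (\<lambda>x h. ennreal (indicator U x * indicator {0<..rr x} h * h ^ ?n)) \<in> borel_measurable (lborel \<Otimes>\<^sub>M lborel)"
      by (simp add: case_prod_beta')
  qed
  also have "\<dots> = (\<integral>\<^sup>+ x. indicator U x * ennreal (rr x ^ (?n+1) / (?n+1)) \<partial>lborel)"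
  proof (rule nn_integral_cong)
    fix x :: 'a
    have "0 \<le> rr x" by (simp add: rr_def)
    show "(\<integral>\<^sup>+ h. ennreal (indicator U x * indicator {0<..rr x} h * h ^ ?n) \<partial>lborel) = indicator U x * ennreal (rr x ^ (?n+1) / (?n+1))"
      using int_power_interval[OF \<open>0 \<le> rr x\<close>, of ?n] by (cases "x \<in> U") auto
  qed
  finally have eq: "emeasure lborel (Dset U) = (\<integral>\<^sup>+ x. indicator U x * ennreal (rr x ^ (?n+1) / (?n+1)) \<partial>lborel)" .
  have "(\<integral>\<^sup>+ x. indicator U x * ennreal (rr x ^ (?n+1) / (?n+1)) \<partial>lborel) * ennreal (real ?n + 1)
      = (\<integral>\<^sup>+ x. indicator U x * ennreal (rr x ^ (?n+1) / (?n+1)) * ennreal (real ?n + 1) \<partial>lborel)"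
    by (rule nn_integral_multc[symmetric]) measurable
  also have "\<dots> = (\<integral>\<^sup>+x. indicator U x * ennreal (rr x ^ (DIM('a)+1)) \<partial>lborel)"
  proof (rule nn_integral_cong)
    fix x :: 'a
    have "0 \<le> rr x" by (simp add: rr_def)
    then show "indicator U x * ennreal (rr x ^ (?n+1) / (?n+1)) * ennreal (real ?n + 1) = indicator U x * ennreal (rr x ^ (DIM('a)+1))"
    proof -
      assume h: "0 \<le> rr x"
      have "ennreal (rr x ^ (?n+1) / (?n+1)) * ennreal (real ?n + 1) = ennreal (rr x ^ (?n+1) / (?n+1) * (real ?n + 1))"
        using h by (subst ennreal_mult) auto
      also have "\<dots> = ennreal (rr x ^ (?n+1))"
      proof -
        have "(1::real) + real ?n \<noteq> 0" by (metis add_pos_nonneg of_nat_0_le_iff zero_less_one less_irrefl)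
        then have "rr x ^ (?n+1) / real (?n+1) * (real ?n + 1) = rr x ^ (?n+1)"
          by (simp only: of_nat_add of_nat_1 times_divide_eq_left add.commute[of "real ?n"]) (erule nonzero_mult_div_cancel_right)
        then show ?thesis by (simp only:)
      qed
      finally show ?thesis by (simp add: mult.assoc)
    qed
  qed
  finally show ?thesis using eq by simp
qed



definition cG :: "'a::euclidean_space \<Rightarrow> 'a \<times> real" where "cG x = rr x *\<^sub>R (x, 1)"
definition cP :: "'a::euclidean_space \<times> real \<Rightarrow> 'a" where "cP z = (1 / snd z) *\<^sub>R fst z"

lemma one_plus_sq_pos: "0 < 1 + (norm (x::'a::real_normed_vector))\<^sup>2"
  by (metis add_pos_nonneg zero_le_power2 zero_less_one)

lemma rr_pos: "0 < rr x"
  unfolding rr_def using one_plus_sq_pos[of x] by simp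

lemma snd_cG[simp]: "snd (cG x) = rr x" and fst_cG[simp]: "fst (cG x) = rr x *\<^sub>R x"
  by (auto simp: cG_def)

lemma norm_cG[simp]: "norm (cG x) = 1"
proof -
  have "norm (cG x) = sqrt ((rr x)\<^sup>2 * (1 + (norm x)\<^sup>2))"
    by (simp add: cG_def norm_Pair power_mult_distrib algebra_simps)
  also have "(rr x)\<^sup>2 * (1 + (norm x)\<^sup>2) = 1"
    using one_plus_sq_pos[of x] by (simp add: rr_def power_divide)
  finally show ?thesis by simp
qed

lemma cP_cG[simp]: "cP (cG x) = x"
  using rr_pos[of x] by (simp add: cP_def)

lemma norm_pair_sq: "(norm (z::'a::real_normed_vector \<times> real))\<^sup>2 = (norm (fst z))\<^sup>2 + (snd z)\<^sup>2"
  by (cases z) (simp add: norm_Pair)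

lemma cG_cP: assumes "norm z = 1" "0 < snd z" shows "cG (cP z) = z"
proof -
  have e: "(norm (fst z))\<^sup>2 + (snd z)\<^sup>2 = 1" using norm_pair_sq[of z] assms by simp
  have "1 + (norm (cP z))\<^sup>2 = 1 / (snd z)\<^sup>2"
    using assms(2) e by (simp add: cP_def power_divide field_simps)
  then have "rr (cP z) = snd z"
    using assms(2) by (simp add: rr_def real_sqrt_divide)
  then show ?thesis using assms(2) by (cases z) (simp add: cG_def cP_def)
qed

lemma cP_scale: "c \<noteq> 0 \<Longrightarrow> cP (c *\<^sub>R z) = cP z"
  by (simp add: cP_def)

lemma cP_neg: "cP (- fst z, snd z) = - cP z"
  by (simp add: cP_def)

lemma north_inner: "inner (north::'a::euclidean_space\<times>real) z = snd z"
  by (cases z) (simp add: north_def inner_Pair)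

lemma abs_snd_le: "norm z = 1 \<Longrightarrow> \<bar>snd (z::'a::euclidean_space\<times>real)\<bar> \<le> 1"
proof -
  assume "norm z = 1"
  then have "(norm (fst z))\<^sup>2 + (snd z)\<^sup>2 = 1" using norm_pair_sq[of z] by simp
  then have "(snd z)\<^sup>2 \<le> 1\<^sup>2" using zero_le_power2[of "norm (fst z)"] by (simp only: power_one)
  then show ?thesis by (metis abs_one abs_le_square_iff)
qed

lemma sball_eq: "sball (north::'a::euclidean_space\<times>real) (pi/2) = {z. norm z = 1 \<and> 0 < snd z}"
proof -
  have "arccos (snd z) < pi/2 \<longleftrightarrow> 0 < snd z" if "norm z = 1" for z :: "'a \<times> real"
  proof -
    have b: "-1 \<le> snd z" "snd z \<le> 1" using abs_snd_le[OF that] by auto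
    show ?thesis
    proof
      assume "arccos (snd z) < pi/2"
      show "0 < snd z"
      proof (rule ccontr)
        assume "\<not> 0 < snd z"
        then have "arccos 0 \<le> arccos (snd z)" using b by (intro arccos_le_arccos) auto
        then show False using \<open>arccos (snd z) < pi/2\<close> by simp
      qed
    next
      assume "0 < snd z"
      then have "arccos (snd z) < arccos 0" using b by (intro arccos_less_arccos) auto
      then show "arccos (snd z) < pi/2" by simp
    qed
  qed
  then show ?thesis by (auto simp: sball_def sdist_def north_inner)
qed

lemma range_cG: "range cG = sball (north::'a::euclidean_space\<times>real) (pi/2)"
  unfolding sball_eq
proof (intro equalityI subsetI)
  fix z :: "'a \<times> real" assume "z \<in> {z. norm z = 1 \<and> 0 < snd z}"
  then have "z = cG (cP z)" using cG_cP[of z] by auto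
  then show "z \<in> range cG" by blast
qed (auto simp: rr_pos)

lemma srefl_north: "srefl (north::'a::euclidean_space\<times>real) z = (- fst z, snd z)"
  by (cases z) (simp add: srefl_def north_inner north_def)

lemma cG_neg: "cG (- x) = (- fst (cG x), snd (cG x))"
  by (simp add: cG_def rr_def)

lemma inj_cG: "inj cG"
  by (metis cP_cG injI)



definition cn :: "'b::real_vector set \<Rightarrow> 'b set" where
  "cn A = {t *\<^sub>R x | t x. t \<in> {0..1} \<and> x \<in> A}"

definition Iu :: "'a::euclidean_space set \<Rightarrow> ennreal" where
  "Iu U = (\<integral>\<^sup>+x. indicator U x * ennreal (cauchy_dens DIM('a) x) \<partial>lborel)"

lemma svol_cn: "svol A = real DIM('b) * measure lebesgue (cn (A :: 'b::euclidean_space set))"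
  by (simp add: svol_def cn_def)

lemma rr_pow: "rr x ^ (DIM('a)+1) = cauchy_dens DIM('a) (x::'a::euclidean_space)"
proof -
  let ?a = "1 + (norm x)\<^sup>2"
  have a: "0 < ?a" by (rule one_plus_sq_pos)
  have "rr x = ?a powr (-1/2)"
    using a by (simp add: rr_def powr_minus_divide powr_half_sqrt)
  then have "rr x ^ (DIM('a)+1) = (?a powr (-1/2)) powr (real (DIM('a)+1))"
    using a by (subst powr_realpow) auto
  also have "\<dots> = ?a powr (- (real DIM('a) + 1) / 2)"
    by (simp add: powr_powr) (rule arg_cong[where f="\<lambda>e. _ powr e"]; simp add: field_simps)
  finally show ?thesis by (simp add: cauchy_dens_def)
qed

lemma cn_sub: "cn (cG ` K) \<subseteq> insert 0 (Dset K)"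
proof
  fix z assume "z \<in> cn (cG ` K)"
  then obtain t x where z: "z = t *\<^sub>R cG x" "t \<in> {0..1}" "x \<in> K" unfolding cn_def by blast
  show "z \<in> insert 0 (Dset K)"
  proof (cases "t = 0")
    case False
    then have "0 < t" using z by auto
    then have "cP z = x" using z by (simp add: cP_scale)
    then show ?thesis using z \<open>0 < t\<close> rr_pos[of x]
      by (auto simp: Dset_def cP_def[symmetric])
  qed (use z in auto)
qed

lemma Dset_decomp:
  assumes "z \<in> Dset K" shows "z = norm z *\<^sub>R cG (cP z)" "0 < norm z" "norm z \<le> 1"
proof -
  have s: "0 < snd z" "norm z \<le> 1" using assms by (auto simp: Dset_def)
  have "norm (snd z) \<le> norm z" using norm_snd_le[of "snd z" "fst z"] by simp
  then have nz: "0 < norm z" using s by (simp only: real_norm_def)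
  let ?w = "(1 / norm z) *\<^sub>R z"
  have "norm ?w = 1" using nz by simp
  moreover have "0 < snd ?w" using nz s by simp
  ultimately have "cG (cP ?w) = ?w" by (rule cG_cP)
  moreover have "cP ?w = cP z" using nz by (simp add: cP_scale)
  ultimately show "z = norm z *\<^sub>R cG (cP z)" using nz by simp
  show "0 < norm z" "norm z \<le> 1" using nz s by auto
qed

lemma Dset_sub: "Dset K \<subseteq> cn (cG ` K)"
proof
  fix z assume z: "z \<in> Dset K"
  then have "cP z \<in> K" by (simp add: Dset_def cP_def)
  have "norm z \<in> {0..1}" using Dset_decomp[OF z] by auto
  then show "z \<in> cn (cG ` K)" using Dset_decomp(1)[OF z] \<open>cP z \<in> K\<close> unfolding cn_def by blast
qed

lemma cn_eq: "K \<noteq> {} \<Longrightarrow> cn (cG ` K) = insert 0 (Dset K)"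
proof -
  assume "K \<noteq> {}"
  then obtain x where "x \<in> K" by auto
  moreover have "(0::'a\<times>real) = 0 *\<^sub>R cG x" by simp
  moreover have "(0::real) \<in> {0..1}" by simp
  ultimately have "0 \<in> cn (cG ` K)" unfolding cn_def by blast
  then show ?thesis using cn_sub Dset_sub by blast
qed

lemma Dset_bounded: "Dset K \<subseteq> cball 0 1"
  by (auto simp: Dset_def)

lemma Dset_fin: "emeasure lborel (Dset K) < \<infinity>"
proof -
  have "emeasure lborel (Dset K) \<le> emeasure lborel (cball (0::'a\<times>real) 1)"
    by (rule emeasure_mono[OF Dset_bounded]) simp
  then show ?thesis using emeasure_lborel_cball_finite[of "0::'a\<times>real" 1] by (simp add: order.strict_trans1)
qed



lemma Iu_eq: fixes U :: "'a::euclidean_space set" assumes "open U"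
  shows "Iu U = emeasure lborel (Dset U) * ennreal (real DIM('a)+1)"
  unfolding Dset_measure[OF assms] Iu_def rr_pow ..

lemma Iu_fin: fixes U :: "'a::euclidean_space set" assumes "open U" shows "Iu U < \<infinity>"
  using Dset_fin[of U] by (simp add: Iu_eq[OF assms] ennreal_mult_less_top)

lemma svol_open: fixes U :: "'a::euclidean_space set" assumes "open U"
  shows "svol (cG ` U) = enn2real (Iu U)"
proof (cases "U = {}")
  case True
  then show ?thesis by (simp add: svol_cn cn_def Iu_def)
next
  case False
  have Db: "Dset U \<in> sets borel" by (rule Dset_borel[OF assms])
  have "measure lebesgue (cn (cG ` U)) = measure lebesgue (Dset U \<union> {0})"
    using cn_eq[OF False] by simp
  also have "\<dots> = measure lebesgue (Dset U)"
  proof (rule measure_Un_null_set)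
    show "Dset U \<in> sets lebesgue" using Db by simp
    show "{0} \<in> null_sets lebesgue"
      by (rule null_sets_completionI) (simp add: countable_imp_null_set_lborel)
  qed
  also have "\<dots> = measure lborel (Dset U)" using Db by simp
  also have "\<dots> = enn2real (emeasure lborel (Dset U))" by (simp add: measure_def)
  finally have "svol (cG ` U) = (real DIM('a) + 1) * enn2real (emeasure lborel (Dset U))"
    by (simp add: svol_cn)
  also have "\<dots> = enn2real (emeasure lborel (Dset U) * ennreal (real DIM('a)+1))"
    by (subst enn2real_mult) (subst enn2real_ennreal, simp_all)
  finally show ?thesis by (simp add: Iu_eq[OF assms])
qed

lemma Iu_UNIV_pos: "0 < Iu (UNIV::'a::euclidean_space set)"
proof -
  let ?c = "(0::'a, 1/2::real)"
  have "ball ?c (1/2) \<subseteq> Dset UNIV"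
  proof
    fix z :: "'a \<times> real" assume "z \<in> ball ?c (1/2)"
    then have d: "norm (z - ?c) < 1/2" by (simp add: dist_norm norm_minus_commute)
    have "norm (snd (z - ?c)) \<le> norm (z - ?c)" using norm_snd_le[of "snd (z - ?c)" "fst (z-?c)"] by (simp only: prod.collapse)
    then have "\<bar>snd z - 1/2\<bar> < 1/2" using d by simp
    then have "0 < snd z" by linarith
    moreover have "norm z \<le> norm (z - ?c) + norm ?c" using norm_triangle_ineq[of "z - ?c" ?c] by simp
    moreover have "norm ?c = 1/2" by (simp add: norm_Pair)
    ultimately show "z \<in> Dset UNIV" using d by (simp add: Dset_def)
  qed
  then have "emeasure lborel (ball ?c (1/2)) \<le> emeasure lborel (Dset (UNIV :: 'a set))"
    by (rule emeasure_mono) (simp add: Dset_borel)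
  moreover have "0 < emeasure lborel (ball ?c (1/2))"
  proof -
    have "\<not> negligible (ball ?c (1/2))" by (rule open_not_negligible) auto
    then have "ball ?c (1/2) \<notin> null_sets lebesgue" by (simp add: negligible_iff_null_sets)
    then have "emeasure lebesgue (ball ?c (1/2)) \<noteq> 0" by (simp add: null_sets_def)
    then show ?thesis by (simp add: zero_less_iff_neq_zero)
  qed
  ultimately have "0 < emeasure lborel (Dset (UNIV :: 'a set))" by simp
  then show ?thesis by (simp add: Iu_eq ennreal_zero_less_mult_iff add_pos_nonneg)
qed

lemma cauchy_nonneg: "0 \<le> cauchy_dens n x"
  by (simp add: cauchy_dens_def)

lemma cauchy_meas[measurable]: "cauchy_dens n \<in> borel_measurable (borel :: 'a::euclidean_space measure)"
  unfolding cauchy_dens_def by measurable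

lemma Z_eq: "integral\<^sup>L (lebesgue :: 'a::euclidean_space measure) (cauchy_dens DIM('a)) = enn2real (Iu (UNIV::'a set))"
proof -
  have "integral\<^sup>L (lebesgue :: 'a measure) (cauchy_dens DIM('a)) = integral\<^sup>L (lborel :: 'a measure) (cauchy_dens DIM('a))"
    using integral_completion[of "cauchy_dens DIM('a)" "lborel :: 'a measure"] by (simp add: measurable_lborel1)
  also have "\<dots> = enn2real (\<integral>\<^sup>+x. ennreal (cauchy_dens DIM('a) x) \<partial>(lborel :: 'a measure))"
    by (rule integral_eq_nn_integral) (auto simp: cauchy_nonneg)
  finally show ?thesis by (simp add: Iu_def)
qed

lemma nu_open: fixes U :: "'a::euclidean_space set" assumes "open U"
  shows "measure (nu DIM('a)) U = enn2real (Iu U) / enn2real (Iu (UNIV::'a set))"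
proof -
  let ?Z = "enn2real (Iu (UNIV::'a set))"
  have Zp: "0 < ?Z" using Iu_UNIV_pos[where 'a='a] Iu_fin[of "UNIV::'a set"]
    by (simp add: enn2real_positive_iff)
  have Ub: "U \<in> sets borel" using assms by auto
  have "emeasure (nu DIM('a)) U = (\<integral>\<^sup>+x. ennreal (cauchy_dens DIM('a) x / ?Z) * indicator U x \<partial>lebesgue)"
    unfolding nu_def Z_eq using Ub
    by (subst emeasure_density) (auto intro!: measurable_completion)
  also have "\<dots> = (\<integral>\<^sup>+x. ennreal (cauchy_dens DIM('a) x / ?Z) * indicator U x \<partial>lborel)"
    by (simp add: nn_integral_completion)
  also have "\<dots> = (\<integral>\<^sup>+x. indicator U x * ennreal (cauchy_dens DIM('a) x) * ennreal (1 / ?Z) \<partial>lborel)"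
    using Zp by (intro nn_integral_cong) (simp add: ennreal_mult'[symmetric] cauchy_nonneg mult_ac)
  also have "\<dots> = Iu U * ennreal (1 / ?Z)"
    unfolding Iu_def
  proof (intro nn_integral_multc)
    have [measurable]: "U \<in> sets borel" by (rule Ub)
    show "(\<lambda>x. indicator U x * ennreal (cauchy_dens DIM('a) x)) \<in> borel_measurable lborel"
      unfolding measurable_lborel1 by measurable
  qed
  finally show ?thesis
    using Zp by (simp add: measure_def enn2real_mult)
qed



lemma convex_lebesgue: fixes K :: "'a::euclidean_space set"
  assumes "convex K" shows "K \<in> sets lebesgue" "K - interior K \<in> null_sets lebesgue"
proof -
  have "K - interior K \<subseteq> frontier K" using closure_subset by (auto simp: frontier_def)
  then have "negligible (K - interior K)"
    using negligible_convex_frontier[OF assms] negligible_subset by blast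
  then show N: "K - interior K \<in> null_sets lebesgue" by (simp add: negligible_iff_null_sets)
  have "K = interior K \<union> (K - interior K)" using interior_subset by blast
  moreover have "interior K \<in> sets lebesgue" by simp
  ultimately show "K \<in> sets lebesgue" using N by (metis null_setsD2 sets.Un)
qed

lemma nu_convex: fixes K :: "'a::euclidean_space set"
  assumes "convex K" shows "measure (nu DIM('a)) K = measure (nu DIM('a)) (interior K)"
proof -
  let ?f = "\<lambda>x::'a. ennreal (cauchy_dens DIM('a) x / integral\<^sup>L (lebesgue :: 'a measure) (cauchy_dens DIM('a)))"
  have fm: "?f \<in> borel_measurable lebesgue"
    by (intro measurable_completion) (simp add: measurable_lborel1 [symmetric], measurable)
  have N: "K - interior K \<in> null_sets lebesgue" by (rule convex_lebesgue(2)[OF assms])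
  have "K - interior K \<in> null_sets (nu DIM('a))"
    unfolding nu_def null_sets_density_iff[OF fm]
  proof
    show "K - interior K \<in> sets lebesgue" using N by auto
    show "AE x in lebesgue. x \<in> K - interior K \<longrightarrow> ?f x = 0"
      using AE_not_in[OF N] by eventually_elim auto
  qed
  moreover have "interior K \<in> sets (nu DIM('a))" by (simp add: nu_def)
  ultimately have "measure (nu DIM('a)) (interior K \<union> (K - interior K)) = measure (nu DIM('a)) (interior K)"
    by (rule measure_Un_null_set[rotated])
  moreover have "interior K \<union> (K - interior K) = K" using interior_subset by blast
  ultimately show ?thesis by simp
qed

lemma Dset_scale: "z \<in> Dset K \<Longrightarrow> 0 < c \<Longrightarrow> c \<le> 1 \<Longrightarrow> c *\<^sub>R z \<in> Dset K"
proof -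
  assume z: "z \<in> Dset K" and c: "0 < c" "c \<le> 1"
  have "norm (c *\<^sub>R z) \<le> 1"
    using z c by (simp add: Dset_def) (metis mult_le_one abs_of_pos less_imp_le norm_ge_zero)
  moreover have "cP (c *\<^sub>R z) = cP z" using c by (simp add: cP_scale)
  ultimately show ?thesis using z c by (simp add: Dset_def cP_def)
qed

lemma Dset_convex: fixes K :: "'a::euclidean_space set"
  assumes "convex K" shows "convex (insert 0 (Dset K))"
proof (rule convexI)
  fix x y :: "'a \<times> real" and u v :: real
  assume x: "x \<in> insert 0 (Dset K)" and y: "y \<in> insert 0 (Dset K)" and uv: "0 \<le> u" "0 \<le> v" "u + v = 1"
  show "u *\<^sub>R x + v *\<^sub>R y \<in> insert 0 (Dset K)"
  proof (cases "x = 0 \<or> y = 0 \<or> u = 0 \<or> v = 0")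
    case True
    then show ?thesis
    proof (elim disjE)
      assume "x = 0"
      then show ?thesis using y uv Dset_scale[of y K v] by (cases "v = 0"; cases "y = 0") auto
    next
      assume "y = 0"
      then show ?thesis using x uv Dset_scale[of x K u] by (cases "u = 0"; cases "x = 0") auto
    next
      assume "u = 0" then show ?thesis using y uv by auto
    next
      assume "v = 0" then show ?thesis using x uv by auto
    qed
  next
    case False
    then have xD: "x \<in> Dset K" and yD: "y \<in> Dset K" and up: "0 < u" and vp: "0 < v"
      using x y uv by auto
    let ?w = "u *\<^sub>R x + v *\<^sub>R y"
    have sx: "0 < snd x" "norm x \<le> 1" "cP x \<in> K" using xD by (auto simp: Dset_def cP_def)
    have sy: "0 < snd y" "norm y \<le> 1" "cP y \<in> K" using yD by (auto simp: Dset_def cP_def)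
    have sw: "snd ?w = u * snd x + v * snd y" by simp
    have swp: "0 < snd ?w" using sx sy up vp by (simp add: add_pos_pos)
    have "norm ?w \<le> u * norm x + v * norm y"
      using norm_triangle_ineq[of "u *\<^sub>R x" "v *\<^sub>R y"] uv by simp
    also have "\<dots> \<le> u * 1 + v * 1"
      using sx sy uv by (intro add_mono mult_left_mono) auto
    finally have nw: "norm ?w \<le> 1" using uv by simp
    let ?a = "u * snd x / snd ?w" and ?b = "v * snd y / snd ?w"
    have ab: "0 \<le> ?a" "0 \<le> ?b" "?a + ?b = 1"
      using sx sy uv swp by (auto simp: add_divide_distrib[symmetric])
    have fx: "fst x = snd x *\<^sub>R cP x" using sx by (simp add: cP_def)
    have fy: "fst y = snd y *\<^sub>R cP y" using sy by (simp add: cP_def)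
    have "cP ?w = ?a *\<^sub>R cP x + ?b *\<^sub>R cP y"
      unfolding cP_def[of ?w] using swp
      by (simp add: fx fy scaleR_add_right divide_inverse mult_ac del: snd_add snd_scaleR)
    then have "cP ?w \<in> K" using convexD[OF assms sx(3) sy(3) ab] by simp
    then have "?w \<in> Dset K" using swp nw by (simp add: Dset_def cP_def)
    then show ?thesis by simp
  qed
qed

lemma interior_sub: fixes K :: "'a::euclidean_space set"
  shows "interior (insert 0 (Dset K)) \<subseteq> insert 0 (Dset (interior K))"
proof
  fix z assume zi: "z \<in> interior (insert 0 (Dset K))"
  show "z \<in> insert 0 (Dset (interior K))"
  proof (cases "z = 0")
    case False
    then have zD: "z \<in> Dset K" using zi interior_subset by blast
    have s: "0 < snd z" using zD by (simp add: Dset_def)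
    obtain e where e: "0 < e" "ball z e \<subseteq> insert 0 (Dset K)" using zi unfolding mem_interior by blast
    have fz: "fst z = snd z *\<^sub>R cP z" using s by (simp add: cP_def)
    have "ball (cP z) (e / snd z) \<subseteq> K"
    proof
      fix y assume "y \<in> ball (cP z) (e / snd z)"
      then have d: "norm (cP z - y) * snd z < e" using s by (simp add: dist_norm pos_less_divide_eq)
      let ?w = "(snd z *\<^sub>R y, snd z)"
      have "dist z ?w = norm (cP z - y) * snd z"
      proof -
        have "z - ?w = (snd z *\<^sub>R (cP z - y), 0)" using fz by (cases z) (simp add: scaleR_diff_right)
        then show ?thesis using s by (simp add: dist_norm norm_Pair)
      qed
      then have "?w \<in> ball z e" using d by simp
      then have "?w \<in> insert 0 (Dset K)" using e(2) by blast
      moreover have "?w \<noteq> 0" using s by (simp add: zero_prod_def)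
      ultimately have "?w \<in> Dset K" by simp
      then show "y \<in> K" using s by (simp add: Dset_def)
    qed
    moreover have "0 < e / snd z" using e(1) s by simp
    ultimately have "cP z \<in> interior K" unfolding mem_interior by blast
    then show ?thesis using zD by (simp add: Dset_def cP_def)
  qed simp
qed

lemma Dset_mono: "A \<subseteq> B \<Longrightarrow> Dset A \<subseteq> Dset B"
  by (auto simp: Dset_def)

lemma insD_lmeas: fixes U :: "'a::euclidean_space set" assumes "open U"
  shows "insert 0 (Dset U) \<in> lmeasurable"
proof (rule bounded_set_imp_lmeasurable)
  show "bounded (insert 0 (Dset U))" proof -
    have "insert 0 (Dset U) \<subseteq> cball 0 1" using Dset_bounded[of U] by auto
    then show ?thesis by (rule bounded_subset[OF bounded_cball])
  qed
  have "insert 0 (Dset U) \<in> sets borel" using Dset_borel[OF assms] by simp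
  then show "insert 0 (Dset U) \<in> sets lebesgue" by simp
qed

lemma meas_insD: fixes U :: "'a::euclidean_space set" assumes "open U"
  shows "measure lebesgue (cn (cG ` U)) = measure lebesgue (insert 0 (Dset U))"
proof (cases "U = {}")
  case True
  have "measure lebesgue {0::'a \<times> real} = 0"
    by (rule measure_eq_0_null_sets, rule null_sets_completionI) (simp add: countable_imp_null_set_lborel)
  then show ?thesis using True by (simp add: cn_def Dset_def)
qed (simp add: cn_eq)

lemma svol_convex: fixes K :: "'a::euclidean_space set"
  assumes "convex K" shows "svol (cG ` K) = svol (cG ` interior K)"
proof (cases "K = {}")
  case False
  let ?C = "insert 0 (Dset K)" and ?D = "insert 0 (Dset (interior K))"
  have C: "cn (cG ` K) = ?C" by (rule cn_eq[OF False])
  have cc: "convex ?C" by (rule Dset_convex[OF assms])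
  have bC: "bounded ?C" proof -
    have "insert 0 (Dset K) \<subseteq> cball 0 1" using Dset_bounded[of K] by auto
    then show ?thesis by (rule bounded_subset[OF bounded_cball])
  qed
  have Cm: "?C \<in> lmeasurable" by (rule measurable_convex[OF cc bC])
  have Dm: "?D \<in> lmeasurable" by (rule insD_lmeas) simp
  have "measure lebesgue (interior ?C) = measure lebesgue ?C"
    by (rule measure_interior[OF bC negligible_convex_frontier[OF cc]])
  moreover have "measure lebesgue (interior ?C) \<le> measure lebesgue ?D"
    by (rule measure_mono_fmeasurable[OF interior_sub _ Dm]) simp
  moreover have "measure lebesgue ?D \<le> measure lebesgue ?C"
    by (rule measure_mono_fmeasurable[OF _ _ Cm]) (use Dm Dset_mono[OF interior_subset, of K] in auto)
  ultimately have "measure lebesgue ?C = measure lebesgue ?D" by linarith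
  then show ?thesis unfolding svol_cn C meas_insD[OF open_interior] by simp
qed simp



definition sl :: "real \<Rightarrow> 'b::real_inner \<Rightarrow> 'b \<Rightarrow> real \<Rightarrow> 'b" where
  "sl th x y s = (sin ((1-s)*th) / sin th) *\<^sub>R x + (sin (s*th) / sin th) *\<^sub>R y"

lemma trig_id:
  fixes th A B :: real
  shows "sin (th - A) * sin (th - B) + sin A * sin B + cos th * (sin (th - A) * sin B + sin A * sin (th - B))
       = (sin th)\<^sup>2 * cos (A - B)"
proof -
  have e: "(sin th)\<^sup>2 + (cos th)\<^sup>2 = 1" by simp
  show ?thesis unfolding sin_diff cos_diff using e by algebra
qed

lemma sl_inner:
  assumes x: "inner x x = 1" and y: "inner y y = 1" and xy: "inner x y = cos th" and st: "sin th \<noteq> 0"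
  shows "inner (sl th x y s) (sl th x y t) = cos ((s - t) * th)"
proof -
  have yx: "inner y x = cos th" using xy by (simp add: inner_commute)
  have "inner (sl th x y s) (sl th x y t) =
    (sin ((1-s)*th) * sin ((1-t)*th) + sin (s*th) * sin (t*th)
      + cos th * (sin ((1-s)*th) * sin (t*th) + sin (s*th) * sin ((1-t)*th))) / (sin th)\<^sup>2"
    unfolding sl_def using st
    by (simp add: inner_add_left inner_add_right x y xy yx field_simps power2_eq_square)
  also have "\<dots> = cos ((s - t) * th)"
    using trig_id[of th "s*th" "t*th"] st
    by (simp add: algebra_simps)
  finally show ?thesis .
qed

lemma inner_one: "norm (x::'b::real_inner) = 1 \<Longrightarrow> inner x x = 1"
  by (simp add: power2_norm_eq_inner[symmetric])

lemma inner_le1: "norm (x::'b::real_inner) = 1 \<Longrightarrow> norm y = 1 \<Longrightarrow> -1 \<le> inner x y \<and> inner x y \<le> 1"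
  using Cauchy_Schwarz_ineq2[of x y] by auto

lemma pair_setup:
  fixes x y :: "'a::euclidean_space \<times> real"
  assumes "norm x = 1" "norm y = 1" "0 < snd x" "0 < snd y" "x \<noteq> y"
  shows "0 < sdist x y" "sdist x y < pi" "cos (sdist x y) = inner x y" "0 < sin (sdist x y)"
proof -
  have b: "-1 \<le> inner x y" "inner x y \<le> 1" using inner_le1[OF assms(1,2)] by auto
  have n1: "inner x y \<noteq> 1"
  proof
    assume "inner x y = 1"
    then have "inner (x - y) (x - y) = 0"
      using inner_one[OF assms(1)] inner_one[OF assms(2)]
      by (simp add: inner_diff_left inner_diff_right inner_commute)
    then show False using assms(5) by simp
  qed
  have n2: "inner x y \<noteq> -1"
  proof
    assume "inner x y = -1"
    then have "inner (x + y) (x + y) = 0"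
      using inner_one[OF assms(1)] inner_one[OF assms(2)]
      by (simp add: inner_add_left inner_add_right inner_commute)
    then have "x + y = 0" by simp
    then have "snd (x + y) = 0" by simp
    then have "snd x + snd y = 0" by simp
    then show False using assms(3,4) by simp
  qed
  have "-1 < inner x y" "inner x y < 1" using b n1 n2 by auto
  then have "0 < arccos (inner x y) \<and> arccos (inner x y) < pi" by (rule arccos_lt_bounded)
  then show "0 < sdist x y" "sdist x y < pi" by (auto simp: sdist_def)
  show "cos (sdist x y) = inner x y" using b by (simp add: sdist_def cos_arccos)
  show "0 < sin (sdist x y)" using \<open>0 < sdist x y\<close> \<open>sdist x y < pi\<close> by (rule sin_gt_zero)
qed

lemma cP_comb:
  fixes x y :: "'a::euclidean_space \<times> real"
  assumes "0 < a * snd x + b * snd y" "snd x \<noteq> 0" "snd y \<noteq> 0"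
  shows "cP (a *\<^sub>R x + b *\<^sub>R y) = (a * snd x / (a * snd x + b * snd y)) *\<^sub>R cP x + (b * snd y / (a * snd x + b * snd y)) *\<^sub>R cP y"
proof -
  have fx: "fst x = snd x *\<^sub>R cP x" using assms by (simp add: cP_def)
  have fy: "fst y = snd y *\<^sub>R cP y" using assms by (simp add: cP_def)
  show ?thesis
    unfolding cP_def[of "a *\<^sub>R x + b *\<^sub>R y"] using assms(1)
    by (simp add: fx fy scaleR_add_right divide_inverse mult_ac del: snd_add snd_scaleR) simp
qed

lemma sdist_sl:
  fixes x y :: "'b::euclidean_space"
  assumes x: "norm x = 1" and y: "norm y = 1" and c: "cos th = inner x y" and th: "0 < th" "th < pi"
    and s: "s \<in> {0..1}" and t: "t \<in> {0..1}"
  shows "sdist (sl th x y s) (sl th x y t) = \<bar>s - t\<bar> * th"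
proof -
  have st: "sin th \<noteq> 0" using sin_gt_zero[OF th] by simp
  have "sdist (sl th x y s) (sl th x y t) = arccos (cos ((s - t) * th))"
    unfolding sdist_def using sl_inner[OF inner_one[OF x] inner_one[OF y] c[symmetric] st] by simp
  also have "cos ((s - t) * th) = cos (\<bar>s - t\<bar> * th)"
  proof (cases "s \<le> t")
    case True
    then have "\<bar>s - t\<bar> * th = - ((s - t) * th)" by (simp add: algebra_simps)
    then show ?thesis by (simp only: cos_minus)
  qed simp
  also have "arccos (cos (\<bar>s - t\<bar> * th)) = \<bar>s - t\<bar> * th"
  proof (rule arccos_cos)
    show "0 \<le> \<bar>s - t\<bar> * th" using th by simp
    have "\<bar>s - t\<bar> \<le> 1" using s t by auto
    then have "\<bar>s - t\<bar> * th \<le> 1 * th" using th by (intro mult_right_mono) auto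
    then show "\<bar>s - t\<bar> * th \<le> pi" using th by linarith
  qed
  finally show ?thesis .
qed

lemma sl_0: "sin th \<noteq> 0 \<Longrightarrow> sl th x y 0 = x" and sl_1: "sin th \<noteq> 0 \<Longrightarrow> sl th x y 1 = y"
  by (simp_all add: sl_def)

lemma sl_norm:
  fixes x y :: "'b::real_inner"
  assumes x: "norm x = 1" and y: "norm y = 1" and c: "cos th = inner x y" and st: "sin th \<noteq> 0"
  shows "norm (sl th x y s) = 1"
proof -
  have "inner (sl th x y s) (sl th x y s) = 1"
    using sl_inner[OF inner_one[OF x] inner_one[OF y] c[symmetric] st] by simp
  then show ?thesis by (simp add: norm_eq_sqrt_inner)
qed



lemma in_sball: "z \<in> sball (north::'a::euclidean_space\<times>real) (pi/2) \<longleftrightarrow> norm z = 1 \<and> 0 < snd z"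
  by (simp add: sball_eq)

lemma sdist_self: "norm (x::'b::euclidean_space) = 1 \<Longrightarrow> sdist x x = 0"
  by (simp add: sdist_def inner_one)

lemma sl_coeffs_nonneg:
  assumes "0 < th" "th < pi" "s \<in> {0..1}"
  shows "0 \<le> sin ((1-s)*th) / sin th" "0 \<le> sin (s*th) / sin th"
proof -
  have st: "0 < sin th" using assms by (intro sin_gt_zero)
  have "0 \<le> (1-s)*th" "(1-s)*th \<le> 1 * th" using assms by (auto intro!: mult_right_mono)
  then have "0 \<le> sin ((1-s)*th)" using assms by (intro sin_ge_zero) linarith+
  then show "0 \<le> sin ((1-s)*th) / sin th" using st by simp
  have "0 \<le> s*th" "s*th \<le> 1 * th" using assms by (auto intro!: mult_right_mono)
  then have "0 \<le> sin (s*th)" using assms by (intro sin_ge_zero) linarith+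
  then show "0 \<le> sin (s*th) / sin th" using st by simp
qed

lemma geod_cG: fixes K :: "'a::euclidean_space set"
  assumes "convex K" shows "geod_convex (cG ` K)"
  unfolding geod_convex_def
proof (intro ballI)
  fix x y assume x: "x \<in> cG ` K" and y: "y \<in> cG ` K"
  have nx: "norm x = 1" "0 < snd x" "cP x \<in> K" using x rr_pos by auto
  have ny: "norm y = 1" "0 < snd y" "cP y \<in> K" using y rr_pos by auto
  show "\<exists>g. min_geodesic g x y \<and> g ` {0..1} \<subseteq> cG ` K"
  proof (cases "x = y")
    case True
    then show ?thesis using x nx by (intro exI[of _ "\<lambda>_. x"]) (auto simp: min_geodesic_def sdist_self)
  next
    case False
    define th where "th = sdist x y"
    have th: "0 < th" "th < pi" "cos th = inner x y" "0 < sin th"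
      using pair_setup[OF nx(1) ny(1) nx(2) ny(2) False] by (auto simp: th_def)
    have st: "sin th \<noteq> 0" using th by simp
    let ?g = "sl th x y"
    have "min_geodesic ?g x y"
      unfolding min_geodesic_def
    proof (intro conjI ballI)
      show "?g 0 = x" "?g 1 = y" using st by (simp_all add: sl_0 sl_1)
      fix s assume "s \<in> {0..1::real}"
      show "?g s \<in> sphere 0 1" using sl_norm[OF nx(1) ny(1) th(3) st] by simp
    next
      fix s t assume "s \<in> {0..1::real}" "t \<in> {0..1::real}"
      then show "sdist (?g s) (?g t) = \<bar>s - t\<bar> * sdist x y"
        using sdist_sl[OF nx(1) ny(1) th(3) th(1,2)] by (simp add: th_def)
    qed
    moreover have "?g ` {0..1} \<subseteq> cG ` K"
    proof
      fix z assume "z \<in> ?g ` {0..1}"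
      then obtain s where s: "s \<in> {0..1}" "z = ?g s" by auto
      define a where "a = sin ((1-s)*th) / sin th"
      define b where "b = sin (s*th) / sin th"
      have ab: "0 \<le> a" "0 \<le> b" using sl_coeffs_nonneg[OF th(1,2) s(1)] by (auto simp: a_def b_def)
      have zab: "z = a *\<^sub>R x + b *\<^sub>R y" using s by (simp add: sl_def a_def b_def)
      have nz: "norm z = 1" using s sl_norm[OF nx(1) ny(1) th(3) st] by simp
      have sz: "snd z = a * snd x + b * snd y" using zab by simp
      have szp: "0 < snd z"
      proof (rule ccontr)
        assume "\<not> 0 < snd z"
        then have "a * snd x + b * snd y \<le> 0" using sz by simp
        moreover have "0 \<le> a * snd x" "0 \<le> b * snd y" using ab nx ny by auto
        ultimately have "a * snd x = 0" "b * snd y = 0" by linarith+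
        then have "a = 0" "b = 0" using nx ny by auto
        then show False using zab nz by simp
      qed
      have "cP z = (a * snd x / snd z) *\<^sub>R cP x + (b * snd y / snd z) *\<^sub>R cP y"
        using cP_comb[of a x b y] szp nx ny by (simp add: zab)
      moreover have "a * snd x / snd z + b * snd y / snd z = 1"
        using szp sz by (simp add: add_divide_distrib[symmetric])
      moreover have "0 \<le> a * snd x / snd z" "0 \<le> b * snd y / snd z" using ab nx ny szp by auto
      ultimately have "cP z \<in> K" using convexD[OF assms nx(3) ny(3)] by simp
      moreover have "z = cG (cP z)" using cG_cP[OF nz szp] by simp
      ultimately show "z \<in> cG ` K" by blast
    qed
    ultimately show ?thesis by blast
  qed
qed

lemma geod_is_sl:
  fixes x y :: "'b::euclidean_space"
  assumes g: "min_geodesic g x y" and th: "0 < sdist x y" "sdist x y < pi" "cos (sdist x y) = inner x y"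
    and s: "s \<in> {0..1}"
  shows "g s = sl (sdist x y) x y s"
proof -
  let ?th = "sdist x y"
  have g0: "g 0 = x" and g1: "g 1 = y" and gs: "\<And>s. s \<in> {0..1} \<Longrightarrow> norm (g s) = 1"
    and gd: "\<And>s t. s \<in> {0..1} \<Longrightarrow> t \<in> {0..1} \<Longrightarrow> sdist (g s) (g t) = \<bar>s - t\<bar> * ?th"
    using g by (auto simp: min_geodesic_def)
  have nx: "norm x = 1" using gs[of 0] g0 by simp
  have ny: "norm y = 1" using gs[of 1] g1 by simp
  have st: "sin ?th \<noteq> 0" using sin_gt_zero[OF th(1,2)] by simp
  let ?z = "g s" and ?w = "sl ?th x y s"
  have nz: "norm ?z = 1" using gs[OF s] .
  have "arccos (inner ?z x) = s * ?th" using gd[OF s, of 0] s g0 by (simp add: sdist_def)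
  then have zx: "inner ?z x = cos (s * ?th)"
    using inner_le1[OF nz nx] by (metis cos_arccos)
  have "arccos (inner ?z y) = (1 - s) * ?th" using gd[OF s, of 1] s g1 by (simp add: sdist_def)
  then have zy: "inner ?z y = cos ((1 - s) * ?th)"
    using inner_le1[OF nz ny] by (metis cos_arccos)
  have I: "\<And>a b. inner (sl ?th x y a) (sl ?th x y b) = cos ((a - b) * ?th)"
    by (rule sl_inner[OF inner_one[OF nx] inner_one[OF ny] th(3)[symmetric] st])
  have wx: "inner ?w x = cos (s * ?th)" using I[of s 0] st by (simp add: sl_0)
  have wy: "inner ?w y = cos ((1 - s) * ?th)"
  proof -
    have "inner ?w y = cos ((s - 1) * ?th)" using I[of s 1] st by (simp add: sl_1)
    also have "(s - 1) * ?th = - ((1 - s) * ?th)" by (simp add: algebra_simps)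
    finally show ?thesis by (simp only: cos_minus)
  qed
  have ww: "inner ?w ?w = 1" using I[of s s] by simp
  define d where "d = ?z - ?w"
  have dx: "inner d x = 0" using zx wx by (simp add: d_def inner_diff_left)
  have dy: "inner d y = 0" using zy wy by (simp add: d_def inner_diff_left)
  have dw0: "inner d ?w = 0"
    unfolding sl_def[of ?th x y s] by (simp add: inner_add_right dx dy)
  have dw: "inner (?z - ?w) ?w = 0" using dw0 by (simp add: d_def)
  have zz: "inner ?z ?z = 1" using inner_one[OF nz] .
  have "inner ?w ?z = 1"
  proof -
    have "inner ?w ?z = inner ?w ?w + inner ?w (?z - ?w)" by (simp add: inner_diff_right)
    then show ?thesis using ww dw by (simp add: inner_commute)
  qed
  then have "inner (?z - ?w) (?z - ?w) = 0"
    using zz dw by (simp add: inner_diff_left inner_diff_right inner_commute)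
  then show ?thesis by simp
qed

lemma convex_cP: fixes K1 :: "('a::euclidean_space \<times> real) set"
  assumes sub: "K1 \<subseteq> sball north (pi/2)" and gc: "geod_convex K1"
  shows "convex (cP ` K1)"
proof (rule convexI)
  fix p q u v
  assume p: "p \<in> cP ` K1" and q: "q \<in> cP ` K1" and uv: "0 \<le> u" "0 \<le> v" "u + v = (1::real)"
  obtain x where x: "x \<in> K1" "p = cP x" using p by auto
  obtain y where y: "y \<in> K1" "q = cP y" using q by auto
  have nx: "norm x = 1" "0 < snd x" using x sub in_sball by blast+
  have ny: "norm y = 1" "0 < snd y" using y sub in_sball by blast+
  show "u *\<^sub>R p + v *\<^sub>R q \<in> cP ` K1"
  proof (cases "x = y")
    case True
    then have "u *\<^sub>R p + v *\<^sub>R q = p" using x y uv by (simp add: scaleR_add_left[symmetric])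
    then show ?thesis using p by simp
  next
    case False
    obtain g where g: "min_geodesic g x y" "g ` {0..1} \<subseteq> K1" using gc x y unfolding geod_convex_def by blast
    define th where "th = sdist x y"
    have th: "0 < th" "th < pi" "cos th = inner x y" "0 < sin th"
      using pair_setup[OF nx(1) ny(1) nx(2) ny(2) False] by (auto simp: th_def)
    have st: "sin th \<noteq> 0" using th by simp
    have gsl: "\<And>s. s \<in> {0..1} \<Longrightarrow> g s = sl th x y s"
      using geod_is_sl[OF g(1)] th by (simp add: th_def)
    have gpos: "\<And>s. s \<in> {0..1} \<Longrightarrow> 0 < snd (sl th x y s)"
    proof -
      fix s :: real assume s: "s \<in> {0..1}"
      then have "g s \<in> K1" using g(2) by blast
      then have "0 < snd (g s)" using sub in_sball by blast
      then show "0 < snd (sl th x y s)" using gsl[OF s] by simp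
    qed
    define lam where "lam s = (sin (s*th) / sin th * snd y) / snd (sl th x y s)" for s
    have sls: "\<And>s. snd (sl th x y s) = sin ((1-s)*th) / sin th * snd x + sin (s*th) / sin th * snd y"
      by (simp add: sl_def)
    have nzd: "\<forall>s\<in>{0..1}. sin ((1-s)*th) / sin th * snd x + sin (s*th) / sin th * snd y \<noteq> 0"
      using gpos sls by (metis less_irrefl)
    have cont: "continuous_on {0..1} lam"
      unfolding lam_def sls by (intro continuous_intros) (use nzd st in auto)
    have l0: "lam 0 = 0" by (simp add: lam_def)
    have l1: "lam 1 = 1" using st ny by (simp add: lam_def sl_1)
    obtain s where s: "0 \<le> s" "s \<le> 1" "lam s = v"
      using IVT'[of lam 0 v 1] cont l0 l1 uv by auto
    have s01: "s \<in> {0..1}" using s by simp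
    define a where "a = sin ((1-s)*th) / sin th"
    define b where "b = sin (s*th) / sin th"
    have zab: "sl th x y s = a *\<^sub>R x + b *\<^sub>R y" by (simp add: sl_def a_def b_def)
    have D: "0 < a * snd x + b * snd y" using gpos[OF s01] zab by simp
    have "cP (sl th x y s) = (a * snd x / (a * snd x + b * snd y)) *\<^sub>R p + (b * snd y / (a * snd x + b * snd y)) *\<^sub>R q"
      using cP_comb[OF D] nx ny x y zab by simp
    moreover have "b * snd y / (a * snd x + b * snd y) = v"
      using s(3) zab by (simp add: lam_def b_def a_def)
    moreover have "a * snd x / (a * snd x + b * snd y) = u"
    proof -
      have "a * snd x / (a * snd x + b * snd y) + b * snd y / (a * snd x + b * snd y) = 1"
        using D by (simp add: add_divide_distrib[symmetric])
      then show ?thesis using \<open>b * snd y / (a * snd x + b * snd y) = v\<close> uv by linarith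
    qed
    ultimately have "cP (g s) = u *\<^sub>R p + v *\<^sub>R q" using gsl[OF s01] by simp
    moreover have "g s \<in> K1" using g(2) s01 by blast
    ultimately show ?thesis by (metis image_eqI)
  qed
qed



lemma meas_nu_convex: fixes K :: "'a::euclidean_space set" assumes "convex K"
  shows "measure (nu DIM('a)) K = enn2real (Iu (interior K)) / enn2real (Iu (UNIV::'a set))"
  using nu_convex[OF assms] nu_open[OF open_interior] by simp

lemma svol_convex2: fixes K :: "'a::euclidean_space set" assumes "convex K"
  shows "svol (cG ` K) = enn2real (Iu (interior K))"
  using svol_convex[OF assms] svol_open[OF open_interior] by simp

lemma Z_pos: "0 < enn2real (Iu (UNIV::'a::euclidean_space set))"
  using Iu_UNIV_pos[where 'a='a] Iu_fin[of "UNIV::'a set"] by (simp add: enn2real_positive_iff)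

lemma svol_sball: "svol (sball (north::'a::euclidean_space \<times> real) (pi/2)) = enn2real (Iu (UNIV::'a set))"
  using svol_convex2[of "UNIV::'a set"] range_cG[where 'a='a] by simp

lemma key_equiv: fixes K M :: "'a::euclidean_space set"
  assumes "convex K" "convex M"
  shows "measure (nu DIM('a)) (K \<inter> M) \<ge> measure (nu DIM('a)) K * measure (nu DIM('a)) M
     \<longleftrightarrow> svol (cG ` K \<inter> cG ` M) * svol (sball (north::'a \<times> real) (pi/2)) \<ge> svol (cG ` K) * svol (cG ` M)"
proof -
  let ?Z = "enn2real (Iu (UNIV::'a set))"
  have Z: "0 < ?Z" by (rule Z_pos)
  have KM: "convex (K \<inter> M)" using assms by (rule convex_Int)
  have im: "cG ` K \<inter> cG ` M = cG ` (K \<inter> M)" by (rule image_Int[OF inj_cG, symmetric])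
  define a where "a = enn2real (Iu (interior (K \<inter> M)))"
  define b where "b = enn2real (Iu (interior K))"
  define c where "c = enn2real (Iu (interior M))"
  have "measure (nu DIM('a)) (K \<inter> M) \<ge> measure (nu DIM('a)) K * measure (nu DIM('a)) M \<longleftrightarrow> a / ?Z \<ge> (b / ?Z) * (c / ?Z)"
    by (simp add: meas_nu_convex assms KM a_def b_def c_def)
  also have "\<dots> \<longleftrightarrow> a * ?Z \<ge> b * c"
    using Z by (simp add: field_simps power2_eq_square)
  also have "\<dots> \<longleftrightarrow> svol (cG ` K \<inter> cG ` M) * svol (sball (north::'a \<times> real) (pi/2)) \<ge> svol (cG ` K) * svol (cG ` M)"
    by (simp add: im svol_convex2 assms KM svol_sball a_def b_def c_def)
  finally show ?thesis .
qed

lemma sym_cG: fixes K :: "'a::euclidean_space set"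
  assumes "origin_symmetric K" shows "centrally_symmetric north (cG ` K)"
  unfolding centrally_symmetric_def
proof
  fix z assume "z \<in> cG ` K"
  then obtain x where x: "x \<in> K" "z = cG x" by auto
  have "srefl north z = cG (- x)" using x by (simp add: srefl_north cG_neg)
  moreover have "- x \<in> K" using assms x by (simp add: origin_symmetric_def)
  ultimately show "srefl north z \<in> cG ` K" by simp
qed

lemma sym_cP: fixes K1 :: "('a::euclidean_space \<times> real) set"
  assumes "centrally_symmetric north K1" shows "origin_symmetric (cP ` K1)"
  unfolding origin_symmetric_def
proof
  fix p assume "p \<in> cP ` K1"
  then obtain z where z: "z \<in> K1" "p = cP z" by auto
  have "srefl north z \<in> K1" using assms z by (simp add: centrally_symmetric_def)
  moreover have "cP (srefl north z) = - p" using z by (simp add: srefl_north cP_neg)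
  ultimately show "- p \<in> cP ` K1" by (metis image_eqI)
qed

lemma cG_cP_set: fixes K1 :: "('a::euclidean_space \<times> real) set"
  assumes "K1 \<subseteq> sball north (pi/2)" shows "cG ` cP ` K1 = K1"
proof -
  have "\<And>z. z \<in> K1 \<Longrightarrow> cG (cP z) = z" using assms cG_cP in_sball by blast
  then show ?thesis by (force simp: image_comp)
qed

theorem mainTheorem4:
  shows "(\<forall>K M :: 'a::euclidean_space set. convex K \<and> convex M \<and> origin_symmetric K \<and> origin_symmetric M
            \<longrightarrow> measure (nu DIM('a)) (K \<inter> M) \<ge> measure (nu DIM('a)) K * measure (nu DIM('a)) M)
     \<longleftrightarrow>
         (\<forall>K1 K2 :: ('a \<times> real) set.
            K1 \<subseteq> sball north (pi/2) \<and> K2 \<subseteq> sball north (pi/2) \<and>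
            geod_convex K1 \<and> geod_convex K2 \<and>
            centrally_symmetric north K1 \<and> centrally_symmetric north K2
            \<longrightarrow> svol (K1 \<inter> K2) * svol (sball (north::'a \<times> real) (pi/2)) \<ge> svol K1 * svol K2)"
proof (intro iffI allI impI)
  fix K1 K2 :: "('a \<times> real) set"
  assume A: "\<forall>K M :: 'a set. convex K \<and> convex M \<and> origin_symmetric K \<and> origin_symmetric M
            \<longrightarrow> measure (nu DIM('a)) (K \<inter> M) \<ge> measure (nu DIM('a)) K * measure (nu DIM('a)) M"
  assume h: "K1 \<subseteq> sball north (pi/2) \<and> K2 \<subseteq> sball north (pi/2) \<and>
            geod_convex K1 \<and> geod_convex K2 \<and>
            centrally_symmetric north K1 \<and> centrally_symmetric north K2"
  have c1: "convex (cP ` K1)" and c2: "convex (cP ` K2)" using h convex_cP by blast+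
  have s1: "origin_symmetric (cP ` K1)" and s2: "origin_symmetric (cP ` K2)" using h sym_cP by blast+
  have e1: "cG ` cP ` K1 = K1" and e2: "cG ` cP ` K2 = K2" using h cG_cP_set by blast+
  have "measure (nu DIM('a)) (cP ` K1 \<inter> cP ` K2) \<ge> measure (nu DIM('a)) (cP ` K1) * measure (nu DIM('a)) (cP ` K2)"
    using A c1 c2 s1 s2 by blast
  then show "svol (K1 \<inter> K2) * svol (sball (north::'a \<times> real) (pi/2)) \<ge> svol K1 * svol K2"
    using key_equiv[OF c1 c2] e1 e2 by simp
next
  fix K M :: "'a set"
  assume B: "\<forall>K1 K2 :: ('a \<times> real) set.
            K1 \<subseteq> sball north (pi/2) \<and> K2 \<subseteq> sball north (pi/2) \<and>
            geod_convex K1 \<and> geod_convex K2 \<and>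
            centrally_symmetric north K1 \<and> centrally_symmetric north K2
            \<longrightarrow> svol (K1 \<inter> K2) * svol (sball (north::'a \<times> real) (pi/2)) \<ge> svol K1 * svol K2"
  assume h: "convex K \<and> convex M \<and> origin_symmetric K \<and> origin_symmetric M"
  have "cG ` K \<subseteq> sball north (pi/2)" "cG ` M \<subseteq> sball north (pi/2)"
    using range_cG[where 'a='a] by auto
  moreover have "geod_convex (cG ` K)" "geod_convex (cG ` M)" using h geod_cG by blast+
  moreover have "centrally_symmetric north (cG ` K)" "centrally_symmetric north (cG ` M)"
    using h sym_cG by blast+
  ultimately have "svol (cG ` K \<inter> cG ` M) * svol (sball (north::'a \<times> real) (pi/2)) \<ge> svol (cG ` K) * svol (cG ` M)"
    using B by blast
  then show "measure (nu DIM('a)) (K \<inter> M) \<ge> measure (nu DIM('a)) K * measure (nu DIM('a)) M"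
    using key_equiv[of K M] h by blast
qed

end
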